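(* Consider the execution of Greedy Dual on any MPMD or MBPMD instance. At every time $\tau$, the values $(y_S(\tau))_S$ form a feasible solution of the dual program for the requests that have arrived by time $\tau$. That is, $y_S(\tau)\ge 0$ for all $S$, and for every edge $e$ between two requests that have arrived by time $\tau$, $\sum_{S:\,e\in\delta(S)} y_S(\tau)\le\mathrm{cost}(e)$.
   Context: Problem (MPMD / MBPMD). Let $(\mathcal{X},\mathrm{dist})$ be a metric space. An instance consists of $2m$ requests $u_1,\dots,u_{2m}$. Each request $u$ is a triple $(\mathrm{pos}(u),\mathrm{atime}(u),\mathrm{sgn}(u))$, where $\mathrm{pos}(u)\in\mathcal{X}$ is its location and $\mathrm{atime}(u)\ge0$ is its arrival time, with arrival times nondecreasing. In MPMD, $\mathrm{sgn}(u)=0$ for all requests. In MBPMD, exactly $m$ requests have sign $+1$ and $m$ have sign $-1$. At time $\tau$, an algorithm may match two arrived, unmatched requests $u,v$ with $\mathrm{sgn}(u)=-\mathrm{sgn}(v)$, at cost $\mathrm{dist}(\mathrm{pos}(u),\mathrm{pos}(v))$ (connection cost) plus $(\tau-\mathrm{atime}(u))+(\tau-\mathrm{atime}(v))$ (waiting costs). All requests must eventually be matched. Notation. Edges are unordered pairs $\{u,v\}$ of distinct requests with $\mathrm{sgn}(u)=-\mathrm{sgn}(v)$. For a set $S$ of requests, $\delta(S)$ is the set of edges with exactly one endpoint in $S$. In MPMD, $\mathrm{sur}(S)=|S|\bmod 2$; in MBPMD, $\mathrm{sur}(S)=|\sum_{u\in S}\mathrm{sgn}(u)|$. For an edge $e=(u,v)$,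 $\mathrm{cost}(e)=\mathrm{dist}(\mathrm{pos}(u),\mathrm{pos}(v))+|\mathrm{atime}(u)-\mathrm{atime}(v)|$. Algorithm Greedy Dual (GD). GD maintains a dual variable $y_S\ge0$ for every set $S$ of already-arrived requests; $y_S(\tau)$ denotes its value at time $\tau$. It also maintains a partition of the arrived requests into active sets, with $\mathcal{A}(u)$ denoting the active set containing $u$. An active set is growing if it contains at least one free request, and non-growing otherwise. - When a request $u$ arrives, $\mathcal{A}(u)\leftarrow\{u\}$ becomes a new active set, and $y_S\leftarrow 0$ for every new set $S$ containing $u$. - Tight-constraint event: while there is an edge $e=(u,v)$ between arrived requests with $\mathcal{A}(u)\neq\mathcal{A}(v)$ and $\sum_{S:\,e\in\delta(S)}y_S=\mathrm{cost}(e)$, GD does the following. It merges the two sets: $S=\mathcal{A}(u)\cup\mathcal{A}(v)$ becomes active and $\mathcal{A}(w)\leftarrow S$ for all $w\in S$, while $\mathcal{A}(u)$ and $\mathcal{A}(v)$ become inactive. It marks the edge $e$. Then, while there are free $u',v'\in S$ with $\mathrm{sgn}(u')=-\mathrm{sgn}(v')$, it matches $u'$ with $v'$ at the current time. - At all other times, $y_S$ increases continuously at rate $1$ (the same rate as time) for every active growing set $S$; all other dual variables stay constant. *)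

theory Defs
  imports Complex_Main
begin

text \<open>Requests are indexed by natural numbers 0 .. N-1 (N = 2m) in arrival order.
  An instance is given by pos, atime, sg and N.\<close>

definition valid_instance :: "nat \<Rightarrow> (nat \<Rightarrow> real) \<Rightarrow> (nat \<Rightarrow> int) \<Rightarrow> bool" where
  "valid_instance N atime sg \<longleftrightarrow>
     even N \<and>
     (\<forall>i<N. 0 \<le> atime i) \<and>
     (\<forall>i j. i \<le> j \<and> j < N \<longrightarrow> atime i \<le> atime j) \<and>
     ((\<forall>i<N. sg i = 0) \<comment> \<open>MPMD\<close>
      \<or> ((\<forall>i<N. sg i = 1 \<or> sg i = -1) \<and>
          card {i. i < N \<and> sg i = 1} = card {i. i < N \<and> sg i = -1}))" \<comment> \<open>MBPMD\<close>

definition is_edge :: "(nat \<Rightarrow> int) \<Rightarrow> nat \<Rightarrow> nat \<Rightarrow> nat \<Rightarrow> bool" where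
  "is_edge sg N u v \<longleftrightarrow> u < N \<and> v < N \<and> u \<noteq> v \<and> sg u = - sg v"

definition cost :: "(nat \<Rightarrow> 'p::metric_space) \<Rightarrow> (nat \<Rightarrow> real) \<Rightarrow> nat \<Rightarrow> nat \<Rightarrow> real" where
  "cost pos atime u v = dist (pos u) (pos v) + \<bar>atime u - atime v\<bar>"

definition dual_sum :: "(nat set \<Rightarrow> real) \<Rightarrow> nat \<Rightarrow> nat \<Rightarrow> nat \<Rightarrow> real" where
  "dual_sum y k u v = (\<Sum>S \<in> {S. S \<subseteq> {..<k} \<and> ((u \<in> S) \<noteq> (v \<in> S))}. y S)"

text \<open>State of Greedy Dual: current time, number of arrived requests (requests 0..narr-1),
  active-set map, dual variables, current matching (set of matched pairs), marked edges.\<close>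
record gd_state =
  clk :: real
  narr :: nat
  act :: "nat \<Rightarrow> nat set"
  yv :: "nat set \<Rightarrow> real"
  matching :: "nat set set"
  marked :: "nat set set"

definition gd_init :: gd_state where
  "gd_init = \<lparr>clk = 0, narr = 0, act = (\<lambda>_. {}), yv = (\<lambda>_. 0), matching = {}, marked = {}\<rparr>"

definition free_reqs :: "nat \<Rightarrow> nat set set \<Rightarrow> nat set" where
  "free_reqs k M = {..<k} - \<Union>M"

definition active_sets :: "gd_state \<Rightarrow> nat set set" where
  "active_sets st = act st ` {..<narr st}"

definition growing :: "gd_state \<Rightarrow> nat set \<Rightarrow> bool" where
  "growing st S \<longleftrightarrow> (\<exists>w\<in>S. w \<in> free_reqs (narr st) (matching st))"

definition grown :: "gd_state \<Rightarrow> real \<Rightarrow> nat set \<Rightarrow> real" where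
  "grown st t = (\<lambda>S. yv st S + (if S \<in> active_sets st \<and> growing st S then t else 0))"

inductive match_loop :: "(nat \<Rightarrow> int) \<Rightarrow> nat \<Rightarrow> nat set \<Rightarrow> nat set set \<Rightarrow> nat set set \<Rightarrow> bool"
  for sg k S where
  stop: "\<not> (\<exists>a b. a \<in> S \<and> b \<in> S \<and> a \<noteq> b \<and> a \<in> free_reqs k M \<and> b \<in> free_reqs k M
                 \<and> sg a = - sg b) \<Longrightarrow> match_loop sg k S M M"
| step: "a \<in> S \<Longrightarrow> b \<in> S \<Longrightarrow> a \<noteq> b \<Longrightarrow> a \<in> free_reqs k M \<Longrightarrow> b \<in> free_reqs k M \<Longrightarrow>
         sg a = - sg b \<Longrightarrow> match_loop sg k S (insert {a, b} M) M' \<Longrightarrow> match_loop sg k S M M'"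

definition tight_crossing :: "(nat \<Rightarrow> 'p::metric_space) \<Rightarrow> (nat \<Rightarrow> real) \<Rightarrow> (nat \<Rightarrow> int) \<Rightarrow> nat
    \<Rightarrow> gd_state \<Rightarrow> (nat set \<Rightarrow> real) \<Rightarrow> nat \<Rightarrow> nat \<Rightarrow> bool" where
  "tight_crossing pos atime sg N st y u v \<longleftrightarrow>
     u < narr st \<and> v < narr st \<and> is_edge sg N u v \<and> act st u \<noteq> act st v \<and>
     dual_sum y (narr st) u v = cost pos atime u v"

text \<open>One step of Greedy Dual (nondeterministic where the algorithm leaves choices open).\<close>
inductive gd_step :: "(nat \<Rightarrow> 'p::metric_space) \<Rightarrow> (nat \<Rightarrow> real) \<Rightarrow> (nat \<Rightarrow> int) \<Rightarrow> nat
    \<Rightarrow> gd_state \<Rightarrow> gd_state \<Rightarrow> bool"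
  for pos atime sg N where
  arrive: "narr st < N \<Longrightarrow> atime (narr st) = clk st \<Longrightarrow>
     gd_step pos atime sg N st
       (st\<lparr>narr := Suc (narr st), act := (act st)(narr st := {narr st}),
           yv := (\<lambda>S. if narr st \<in> S then 0 else yv st S)\<rparr>)"
| wait: "0 < d \<Longrightarrow> (narr st < N \<longrightarrow> clk st + d \<le> atime (narr st)) \<Longrightarrow>
     (\<forall>t. 0 \<le> t \<and> t < d \<longrightarrow> \<not> (\<exists>u v. tight_crossing pos atime sg N st (grown st t) u v)) \<Longrightarrow>
     gd_step pos atime sg N st (st\<lparr>clk := clk st + d, yv := grown st d\<rparr>)"
| merge: "tight_crossing pos atime sg N st (yv st) u v \<Longrightarrow>
     S = act st u \<union> act st v \<Longrightarrow>
     match_loop sg (narr st) S (matching st) M' \<Longrightarrow>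
     gd_step pos atime sg N st
       (st\<lparr>act := (\<lambda>w. if w \<in> S then S else act st w), marked := insert {u, v} (marked st),
           matching := M'\<rparr>)"

inductive gd_reachable :: "(nat \<Rightarrow> 'p::metric_space) \<Rightarrow> (nat \<Rightarrow> real) \<Rightarrow> (nat \<Rightarrow> int) \<Rightarrow> nat
    \<Rightarrow> gd_state \<Rightarrow> bool"
  for pos atime sg N where
  init: "gd_reachable pos atime sg N gd_init"
| step: "gd_reachable pos atime sg N st \<Longrightarrow> gd_step pos atime sg N st st' \<Longrightarrow>
         gd_reachable pos atime sg N st'"

end

theory Submission
  imports Defs
begin

definition inv_gd :: "(nat \<Rightarrow> 'p::metric_space) \<Rightarrow> (nat \<Rightarrow> real) \<Rightarrow> (nat \<Rightarrow> int) \<Rightarrow> nat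
    \<Rightarrow> gd_state \<Rightarrow> bool" where
 "inv_gd pos atime sg N st \<longleftrightarrow>
 (\<forall>S. 0 \<le> yv st S) \<and>
 (\<forall>w<narr st. w \<in> act st w \<and> act st w \<subseteq> {..<narr st}) \<and>
 (\<forall>w<narr st. \<forall>w'<narr st. act st w = act st w' \<or> act st w \<inter> act st w' = {}) \<and>
 (\<forall>w<narr st. (\<Sum>S\<in>{S. S \<subseteq> {..<narr st} \<and> w \<in> S}. yv st S) \<le> clk st - atime w) \<and>
 (\<forall>u v. u < narr st \<and> v < narr st \<and> is_edge sg N u v \<longrightarrow>
     dual_sum (yv st) (narr st) u v \<le> cost pos atime u v)"

lemma fin_sets: "finite {S. S \<subseteq> {..<k::nat} \<and> P S}"
  by (rule finite_subset[of _ "Pow {..<k}"]) auto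

lemma restrict_sum:
  "(\<Sum>S\<in>{S. S \<subseteq> {..<Suc n} \<and> P S}. if n \<in> S then 0 else y S)
   = (\<Sum>S\<in>{S. S \<subseteq> {..<n} \<and> P S}. (y S :: real))"
proof -
  have "(\<Sum>S\<in>{S. S \<subseteq> {..<n} \<and> P S}. (y S :: real))
     = (\<Sum>S\<in>{S. S \<subseteq> {..<n} \<and> P S}. if n \<in> S then 0 else y S)"
    by (rule sum.cong) auto
  also have "\<dots> = (\<Sum>S\<in>{S. S \<subseteq> {..<Suc n} \<and> P S}. if n \<in> S then 0 else y S)"
  proof (rule sum.mono_neutral_left)
    show "finite {S. S \<subseteq> {..<Suc n} \<and> P S}" by (rule fin_sets)
    show "{S. S \<subseteq> {..<n} \<and> P S} \<subseteq> {S. S \<subseteq> {..<Suc n} \<and> P S}" by auto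
    show "\<forall>i\<in>{S. S \<subseteq> {..<Suc n} \<and> P S} - {S. S \<subseteq> {..<n} \<and> P S}.
            (if n \<in> i then 0 else y i) = 0"
    proof
      fix i assume "i \<in> {S. S \<subseteq> {..<Suc n} \<and> P S} - {S. S \<subseteq> {..<n} \<and> P S}"
      then have "n \<in> i" by (auto simp: less_Suc_eq)
      then show "(if n \<in> i then 0 else y i) = 0" by simp
    qed
  qed
  finally show ?thesis by simp
qed

lemma grown_sum:
  assumes "finite A"
  shows "(\<Sum>S\<in>A. grown st t S) = (\<Sum>S\<in>A. yv st S)
           + t * real (card {S\<in>A. S \<in> active_sets st \<and> growing st S})"
proof -
  have "(\<Sum>S\<in>A. grown st t S) = (\<Sum>S\<in>A. yv st S)
        + (\<Sum>S\<in>A. if S \<in> active_sets st \<and> growing st S then t else 0)"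
    unfolding grown_def by (simp add: sum.distrib)
  also have "(\<Sum>S\<in>A. if S \<in> active_sets st \<and> growing st S then t else 0)
        = (\<Sum>S\<in>{S\<in>A. S \<in> active_sets st \<and> growing st S}. t)"
    using sum.inter_filter[OF assms, of "\<lambda>_. t", symmetric] by simp
  finally show ?thesis by simp
qed

lemma inv_init: "inv_gd pos atime sg N gd_init"
  unfolding inv_gd_def gd_init_def by simp

lemma inv_arrive:
  assumes I: "inv_gd pos atime sg N st" and a: "atime (narr st) = clk st"
  shows "inv_gd pos atime sg N
     (st\<lparr>narr := Suc (narr st), act := (act st)(narr st := {narr st}),
           yv := (\<lambda>S. if narr st \<in> S then 0 else yv st S)\<rparr>)"
proof -
  let ?n = "narr st"
  have y: "\<forall>S. 0 \<le> yv st S"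
    and a2: "\<forall>w<?n. w \<in> act st w \<and> act st w \<subseteq> {..<?n}"
    and a3: "\<forall>w<?n. \<forall>w'<?n. act st w = act st w' \<or> act st w \<inter> act st w' = {}"
    and a4: "\<forall>w<?n. (\<Sum>S\<in>{S. S \<subseteq> {..<?n} \<and> w \<in> S}. yv st S) \<le> clk st - atime w"
    and a5: "\<forall>u v. u < ?n \<and> v < ?n \<and> is_edge sg N u v \<longrightarrow>
     dual_sum (yv st) ?n u v \<le> cost pos atime u v"
    using I unfolding inv_gd_def by auto
  have R: "\<And>P. (\<Sum>S\<in>{S. S \<subseteq> {..<Suc ?n} \<and> P S}. if ?n \<in> S then 0 else yv st S)
        = (\<Sum>S\<in>{S. S \<subseteq> {..<?n} \<and> P S}. yv st S)" by (rule restrict_sum)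
  have N1: "\<forall>S. 0 \<le> (if ?n \<in> S then 0 else yv st S)" using y by simp
  have N2: "\<forall>w<Suc ?n. w \<in> ((act st)(?n := {?n})) w \<and> ((act st)(?n := {?n})) w \<subseteq> {..<Suc ?n}"
    using a2 by (auto simp: less_Suc_eq subset_iff)
  have N3: "\<forall>w<Suc ?n. \<forall>w'<Suc ?n. ((act st)(?n := {?n})) w = ((act st)(?n := {?n})) w'
           \<or> ((act st)(?n := {?n})) w \<inter> ((act st)(?n := {?n})) w' = {}"
  proof (intro allI impI)
    fix w w' assume "w < Suc ?n" "w' < Suc ?n"
    then show "((act st)(?n := {?n})) w = ((act st)(?n := {?n})) w'
           \<or> ((act st)(?n := {?n})) w \<inter> ((act st)(?n := {?n})) w' = {}"
      using a2 a3 by (auto simp: less_Suc_eq)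
  qed
  have N4: "\<forall>w<Suc ?n. (\<Sum>S\<in>{S. S \<subseteq> {..<Suc ?n} \<and> w \<in> S}. if ?n \<in> S then 0 else yv st S)
            \<le> clk st - atime w"
  proof (intro allI impI)
    fix w assume w: "w < Suc ?n"
    have e: "(\<Sum>S\<in>{S. S \<subseteq> {..<Suc ?n} \<and> w \<in> S}. if ?n \<in> S then 0 else yv st S)
          = (\<Sum>S\<in>{S. S \<subseteq> {..<?n} \<and> w \<in> S}. yv st S)" by (rule R)
    show "(\<Sum>S\<in>{S. S \<subseteq> {..<Suc ?n} \<and> w \<in> S}. if ?n \<in> S then 0 else yv st S)
            \<le> clk st - atime w"
    proof (cases "w = ?n")
      case True
      have "{S. S \<subseteq> {..<?n} \<and> w \<in> S} = {}" using True by auto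
      then show ?thesis using e True a by simp
    next
      case False
      then show ?thesis using e a4 w by (simp add: less_Suc_eq)
    qed
  qed
  have N5: "\<forall>u v. u < Suc ?n \<and> v < Suc ?n \<and> is_edge sg N u v \<longrightarrow>
     dual_sum (\<lambda>S. if ?n \<in> S then 0 else yv st S) (Suc ?n) u v \<le> cost pos atime u v"
  proof (intro allI impI)
    fix u v assume h: "u < Suc ?n \<and> v < Suc ?n \<and> is_edge sg N u v"
    have e: "dual_sum (\<lambda>S. if ?n \<in> S then 0 else yv st S) (Suc ?n) u v
        = (\<Sum>S\<in>{S. S \<subseteq> {..<?n} \<and> ((u \<in> S) \<noteq> (v \<in> S))}. yv st S)"
      unfolding dual_sum_def by (rule R)
    have uv: "u \<noteq> v" using h unfolding is_edge_def by simp
    have cge: "clk st - atime x \<le> cost pos atime x ?n \<and> clk st - atime x \<le> cost pos atime ?n x" for x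
    proof -
      have h: "0 \<le> dist (pos x) (pos ?n)" by simp
      have h2: "clk st - atime x \<le> \<bar>atime x - clk st\<bar>" "clk st - atime x \<le> \<bar>clk st - atime x\<bar>" by arith+
      show ?thesis unfolding cost_def dist_commute[of "pos ?n" "pos x"] using a h h2 by linarith
    qed
    show "dual_sum (\<lambda>S. if ?n \<in> S then 0 else yv st S) (Suc ?n) u v \<le> cost pos atime u v"
    proof (cases "u = ?n")
      case True
      then have v: "v < ?n" using h uv by (simp add: less_Suc_eq)
      have "{S. S \<subseteq> {..<?n} \<and> ((u \<in> S) \<noteq> (v \<in> S))} = {S. S \<subseteq> {..<?n} \<and> v \<in> S}"
        using True by auto
      then show ?thesis using e a4 v cge[of v] True by force
    next
      case F1: False
      show ?thesis
      proof (cases "v = ?n")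
        case True
        then have u: "u < ?n" using h uv F1 by (simp add: less_Suc_eq)
        have "{S. S \<subseteq> {..<?n} \<and> ((u \<in> S) \<noteq> (v \<in> S))} = {S. S \<subseteq> {..<?n} \<and> u \<in> S}"
          using True by auto
        then show ?thesis using e a4 u cge[of u] True by force
      next
        case False
        then have "u < ?n" "v < ?n" using h F1 by (auto simp: less_Suc_eq)
        then show ?thesis using e a5 h unfolding dual_sum_def by simp
      qed
    qed
  qed
  show ?thesis unfolding inv_gd_def using N1 N2 N3 N4 N5 by simp
qed

lemma active_eq:
  assumes a2: "\<forall>w<narr st. w \<in> act st w \<and> act st w \<subseteq> {..<narr st}"
    and a3: "\<forall>w<narr st. \<forall>w'<narr st. act st w = act st w' \<or> act st w \<inter> act st w' = {}"
    and S: "S \<in> active_sets st" and w: "w < narr st" "w \<in> S"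
  shows "S = act st w"
proof -
  obtain w' where w': "w' < narr st" "S = act st w'" using S unfolding active_sets_def by auto
  have "act st w' \<inter> act st w \<noteq> {}" using w w' a2 by auto
  then show ?thesis using a3 w w' by metis
qed

lemma inv_wait:
  assumes I: "inv_gd pos atime sg N st" and d: "0 < d"
    and H: "\<forall>t. 0 \<le> t \<and> t < d \<longrightarrow> \<not> (\<exists>u v. tight_crossing pos atime sg N st (grown st t) u v)"
  shows "inv_gd pos atime sg N (st\<lparr>clk := clk st + d, yv := grown st d\<rparr>)"
proof -
  let ?n = "narr st"
  have y: "\<forall>S. 0 \<le> yv st S"
    and a2: "\<forall>w<?n. w \<in> act st w \<and> act st w \<subseteq> {..<?n}"
    and a3: "\<forall>w<?n. \<forall>w'<?n. act st w = act st w' \<or> act st w \<inter> act st w' = {}"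
    and a4: "\<forall>w<?n. (\<Sum>S\<in>{S. S \<subseteq> {..<?n} \<and> w \<in> S}. yv st S) \<le> clk st - atime w"
    and a5: "\<forall>u v. u < ?n \<and> v < ?n \<and> is_edge sg N u v \<longrightarrow>
     dual_sum (yv st) ?n u v \<le> cost pos atime u v"
    using I unfolding inv_gd_def by auto
  have K1: "\<forall>S. 0 \<le> grown st d S" using y d unfolding grown_def by simp
  have K4: "\<forall>w<?n. (\<Sum>S\<in>{S. S \<subseteq> {..<?n} \<and> w \<in> S}. grown st d S) \<le> clk st + d - atime w"
  proof (intro allI impI)
    fix w assume w: "w < ?n"
    let ?A = "{S. S \<subseteq> {..<?n} \<and> w \<in> S}"
    let ?C = "{S\<in>?A. S \<in> active_sets st \<and> growing st S}"
    have "?C \<subseteq> {act st w}" using active_eq[OF a2 a3 _ w] by auto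
    then have "card ?C \<le> 1" using card_mono[of "{act st w}" ?C] by simp
    then have "d * real (card ?C) \<le> d" using d by simp
    moreover have "(\<Sum>S\<in>?A. grown st d S) = (\<Sum>S\<in>?A. yv st S) + d * real (card ?C)"
      by (rule grown_sum[OF fin_sets])
    ultimately show "(\<Sum>S\<in>?A. grown st d S) \<le> clk st + d - atime w"
      using a4[rule_format, OF w] by linarith
  qed
  have K5: "\<forall>u v. u < ?n \<and> v < ?n \<and> is_edge sg N u v \<longrightarrow>
     dual_sum (grown st d) ?n u v \<le> cost pos atime u v"
  proof (intro allI impI)
    fix u v assume h: "u < ?n \<and> v < ?n \<and> is_edge sg N u v"
    let ?A = "{S. S \<subseteq> {..<?n} \<and> ((u \<in> S) \<noteq> (v \<in> S))}"
    let ?C = "{S\<in>?A. S \<in> active_sets st \<and> growing st S}"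
    define D where "D = dual_sum (yv st) ?n u v"
    define c where "c = real (card ?C)"
    have c0: "0 \<le> c" unfolding c_def by simp
    have lin: "dual_sum (grown st t) ?n u v = D + t * c" for t
      unfolding dual_sum_def D_def c_def by (rule grown_sum[OF fin_sets])
    have D: "D \<le> cost pos atime u v" using a5 h unfolding D_def by blast
    show "dual_sum (grown st d) ?n u v \<le> cost pos atime u v"
    proof (cases "act st u = act st v")
      case True
      have "?C = {}"
      proof (rule ccontr)
        assume "?C \<noteq> {}"
        then obtain S where S: "S \<in> ?A" "S \<in> active_sets st" by blast
        show False
        proof (cases "u \<in> S")
          case True
          then have "S = act st u" using active_eq[OF a2 a3 S(2)] h by blast
          then show False using S(1) True \<open>act st u = act st v\<close> a2 h by auto
        next
          case False
          then have vS: "v \<in> S" using S(1) by auto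
          then have "S = act st v" using active_eq[OF a2 a3 S(2)] h by blast
          then show False using S(1) False \<open>act st u = act st v\<close> a2 h by auto
        qed
      qed
      then have "c = 0" unfolding c_def by simp
      then show ?thesis using lin[of d] D by simp
    next
      case False
      have ne: "D + t * c \<noteq> cost pos atime u v" if "0 \<le> t" "t < d" for t
      proof
        assume "D + t * c = cost pos atime u v"
        then have "tight_crossing pos atime sg N st (grown st t) u v"
          unfolding tight_crossing_def using h False lin[of t] by simp
        then show False using H that by blast
      qed
      show ?thesis
      proof (rule ccontr)
        assume "\<not> ?thesis"
        then have gt: "cost pos atime u v < D + d * c" using lin[of d] by simp
        then have cp: "0 < c" using D c0 d
          by (metis add.right_neutral mult_zero_right not_le order_le_less)
        define t0 where "t0 = (cost pos atime u v - D) / c"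
        have "0 \<le> t0" unfolding t0_def using D cp by simp
        moreover have "t0 < d" unfolding t0_def using gt cp
          by (simp add: pos_divide_less_eq algebra_simps)
        moreover have "D + t0 * c = cost pos atime u v" unfolding t0_def using cp by simp
        ultimately show False using ne by blast
      qed
    qed
  qed
  show ?thesis unfolding inv_gd_def using K1 a2 a3 K4 K5 by simp
qed

lemma inv_merge:
  assumes I: "inv_gd pos atime sg N st"
    and T: "tight_crossing pos atime sg N st (yv st) u v"
    and S: "S = act st u \<union> act st v"
  shows "inv_gd pos atime sg N
       (st\<lparr>act := (\<lambda>w. if w \<in> S then S else act st w), marked := insert {u, v} (marked st),
           matching := M'\<rparr>)"
proof -
  let ?n = "narr st"
  have y: "\<forall>S. 0 \<le> yv st S"
    and a2: "\<forall>w<?n. w \<in> act st w \<and> act st w \<subseteq> {..<?n}"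
    and a3: "\<forall>w<?n. \<forall>w'<?n. act st w = act st w' \<or> act st w \<inter> act st w' = {}"
    and a4: "\<forall>w<?n. (\<Sum>S\<in>{S. S \<subseteq> {..<?n} \<and> w \<in> S}. yv st S) \<le> clk st - atime w"
    and a5: "\<forall>u v. u < ?n \<and> v < ?n \<and> is_edge sg N u v \<longrightarrow>
     dual_sum (yv st) ?n u v \<le> cost pos atime u v"
    using I unfolding inv_gd_def by auto
  have uv: "u < ?n" "v < ?n" using T unfolding tight_crossing_def by auto
  let ?A = "\<lambda>w. if w \<in> S then S else act st w"
  have Ssub: "S \<subseteq> {..<?n}" using S a2 uv by auto
  have N2: "\<forall>w<?n. w \<in> ?A w \<and> ?A w \<subseteq> {..<?n}" using a2 Ssub by auto
  have disj: "act st w \<inter> S = {}" if "w < ?n" "w \<notin> S" for w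
  proof -
    have "act st w \<inter> act st u = {}"
      using a3 that uv a2 S by (metis IntI UnI1 empty_iff)
    moreover have "act st w \<inter> act st v = {}"
      using a3 that uv a2 S by (metis IntI UnI2 empty_iff)
    ultimately show ?thesis using S by auto
  qed
  have N3: "\<forall>w<?n. \<forall>w'<?n. ?A w = ?A w' \<or> ?A w \<inter> ?A w' = {}"
  proof (intro allI impI)
    fix w w' assume w: "w < ?n" and w': "w' < ?n"
    show "?A w = ?A w' \<or> ?A w \<inter> ?A w' = {}"
      using disj[OF w] disj[OF w'] a3 w w' by auto
  qed
  show ?thesis unfolding inv_gd_def using y N2 N3 a4 a5 by simp
qed

lemma inv_step:
  assumes "inv_gd pos atime sg N st" "gd_step pos atime sg N st st'"
  shows "inv_gd pos atime sg N st'"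
  using assms(2,1)
proof (induction rule: gd_step.induct)
  case (arrive st) then show ?case using inv_arrive by blast
next
  case (wait d st) then show ?case using inv_wait by blast
next
  case (merge st u v S M') then show ?case using inv_merge by blast
qed

lemma inv_reach:
  assumes "gd_reachable pos atime sg N st"
  shows "inv_gd pos atime sg N st"
  using assms
proof (induction rule: gd_reachable.induct)
  case init then show ?case by (rule inv_init)
next
  case (step st st') then show ?case using inv_step by blast
qed

theorem lemma3:
  fixes pos :: "nat \<Rightarrow> 'p::metric_space" and atime :: "nat \<Rightarrow> real"
    and sg :: "nat \<Rightarrow> int" and N :: nat and st :: gd_state
  assumes "valid_instance N atime sg"
    and "gd_reachable pos atime sg N st"
  shows "(\<forall>S. S \<subseteq> {..<narr st} \<longrightarrow> 0 \<le> yv st S) \<and>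
         (\<forall>u v. u < narr st \<and> v < narr st \<and> is_edge sg N u v \<longrightarrow>
                dual_sum (yv st) (narr st) u v \<le> cost pos atime u v)"
  using inv_reach[OF assms(2)] unfolding inv_gd_def by blast

end
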